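(* Let $\alpha\ge1$, let $B\le B_a$ be positive integers, let $\ell,I$ be integers with $0\le\ell\le B_a$ and $I\ge\ell$, and let $(w_k)_{k\le I}$ be reals with $w_k=0$ for $k\le0$ and $0\le w_1\le\cdots\le w_I$. With $\phi_i,\psi_i,\Omega$ as in the context, let $\Psi:=\sum_{i=I-\ell+1}^{I}\psi_i$ and $$\tau:=1+\frac{1}{E^{\alpha}-1}\cdot\frac{1}{\alpha_B}\left(E^{\alpha}-\frac{E^{\alpha}-1}{\alpha_{B_a}}\right).$$ Then $$\sum_{i=I-B_a+1}^{I-\ell}\phi_i w_i+\sum_{i=I-\ell+1}^{I}\psi_i w_i+w_{I-B_a}\,\Omega\ \le\ M\sum_{i=I-B_a+1}^{I}w_i,$$ where $M:=\max\{\tau,\Psi/\ell\}$ if $\ell\ge1$ and $M:=\tau$ if $\ell=0$.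
   Context: Notation: $E:=(1+1/B_a)^{B_a}$, $c:=\frac{E^{\alpha/B_a}-1}{E^{\alpha}-1}$, $e_B:=(1+1/B)^B$, $\alpha_B:=B(e_B^{\alpha/B}-1)$, $\alpha_{B_a}:=B_a(E^{\alpha/B_a}-1)$. The coefficients are $\phi_i:=(B_a-\ell)\,c\,E^{\alpha(I-i)/B_a}+\frac{1}{\alpha_B}\cdot\frac{E^{\alpha}-E^{\alpha(I-\ell-i)/B_a}}{E^{\alpha}-1}$, $\psi_i:=1+(B_a-\ell)\,c\,E^{\alpha(I-i)/B_a}$, and $\Omega:=\frac{1}{\alpha_B}\cdot\frac{1}{E^{\alpha}-1}\left(\ell E^{\alpha}-\frac{E^{\alpha}-E^{\alpha(B_a-\ell)/B_a}}{E^{\alpha/B_a}-1}\right)$. *)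

theory Defs
  imports Complex_Main
begin

definition EE :: "nat \<Rightarrow> real" where
  "EE Ba = (1 + 1 / real Ba) ^ Ba"

definition cc :: "real \<Rightarrow> nat \<Rightarrow> real" where
  "cc \<alpha> Ba = (EE Ba powr (\<alpha> / real Ba) - 1) / (EE Ba powr \<alpha> - 1)"

definition eB :: "nat \<Rightarrow> real" where
  "eB B = (1 + 1 / real B) ^ B"

definition alphaB :: "real \<Rightarrow> nat \<Rightarrow> real" where
  "alphaB \<alpha> B = real B * (eB B powr (\<alpha> / real B) - 1)"

definition alphaBa :: "real \<Rightarrow> nat \<Rightarrow> real" where
  "alphaBa \<alpha> Ba = real Ba * (EE Ba powr (\<alpha> / real Ba) - 1)"

definition phi :: "real \<Rightarrow> nat \<Rightarrow> nat \<Rightarrow> nat \<Rightarrow> int \<Rightarrow> int \<Rightarrow> real" where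
  "phi \<alpha> B Ba l I i =
     (real Ba - real l) * cc \<alpha> Ba * EE Ba powr (\<alpha> * real_of_int (I - i) / real Ba)
     + (1 / alphaB \<alpha> B) * ((EE Ba powr \<alpha> - EE Ba powr (\<alpha> * real_of_int (I - int l - i) / real Ba))
                              / (EE Ba powr \<alpha> - 1))"

definition psi :: "real \<Rightarrow> nat \<Rightarrow> nat \<Rightarrow> int \<Rightarrow> int \<Rightarrow> real" where
  "psi \<alpha> Ba l I i = 1 + (real Ba - real l) * cc \<alpha> Ba * EE Ba powr (\<alpha> * real_of_int (I - i) / real Ba)"

definition Omega :: "real \<Rightarrow> nat \<Rightarrow> nat \<Rightarrow> nat \<Rightarrow> real" where
  "Omega \<alpha> B Ba l =
     (1 / alphaB \<alpha> B) * (1 / (EE Ba powr \<alpha> - 1)) *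
     (real l * EE Ba powr \<alpha>
      - (EE Ba powr \<alpha> - EE Ba powr (\<alpha> * (real Ba - real l) / real Ba)) / (EE Ba powr (\<alpha> / real Ba) - 1))"

definition tau :: "real \<Rightarrow> nat \<Rightarrow> nat \<Rightarrow> real" where
  "tau \<alpha> B Ba = 1 + (1 / (EE Ba powr \<alpha> - 1)) * (1 / alphaB \<alpha> B) *
      (EE Ba powr \<alpha> - (EE Ba powr \<alpha> - 1) / alphaBa \<alpha> Ba)"

definition Psi :: "real \<Rightarrow> nat \<Rightarrow> nat \<Rightarrow> int \<Rightarrow> real" where
  "Psi \<alpha> Ba l I = (\<Sum>i\<in>{I - int l + 1..I}. psi \<alpha> Ba l I i)"

definition MM :: "real \<Rightarrow> nat \<Rightarrow> nat \<Rightarrow> nat \<Rightarrow> int \<Rightarrow> real" where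
  "MM \<alpha> B Ba l I = (if l \<ge> 1 then max (tau \<alpha> B Ba) (Psi \<alpha> Ba l I / real l) else tau \<alpha> B Ba)"

end

theory Submission
  imports Defs
begin


lemma antimono_upto:
  fixes v :: "nat \<Rightarrow> real"
  assumes "\<And>j. Suc j < N \<Longrightarrow> v (Suc j) \<le> v j"
  shows "j \<le> k \<Longrightarrow> k < N \<Longrightarrow> v k \<le> v j"
proof (induction k)
  case 0 then show ?case by simp
next
  case (Suc k)
  show ?case
  proof (cases "j = Suc k")
    case True then show ?thesis by simp
  next
    case False
    then have "v k \<le> v j" using Suc by simp
    moreover have "v (Suc k) \<le> v k" using assms Suc.prems by simp
    ultimately show ?thesis by simp
  qed
qed

lemma abel_nonpos:
  fixes b v :: "nat \<Rightarrow> real"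
  assumes "\<And>t. t \<le> n \<Longrightarrow> (\<Sum>j<t. b j) \<le> 0"
    and "\<And>j. Suc j < n \<Longrightarrow> v (Suc j) \<le> v j"
    and "0 < n \<Longrightarrow> 0 \<le> v (n - 1)"
  shows "(\<Sum>j<n. b j * v j) \<le> 0"
  using assms
proof (induction n arbitrary: v)
  case 0
  then show ?case by simp
next
  case (Suc n)
  have eq: "(\<Sum>j<Suc n. b j * v j) = (\<Sum>j<n. b j * (v j - v n)) + (\<Sum>j<Suc n. b j) * v n"
    by (simp add: algebra_simps sum_subtractf sum_distrib_right sum_distrib_left)
  have mono: "\<And>j. j \<le> n \<Longrightarrow> v n \<le> v j"
    using antimono_upto[of "Suc n" v] Suc.prems(2) by blast
  have "(\<Sum>j<n. b j * (v j - v n)) \<le> 0"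
    apply (rule Suc.IH)
    using Suc.prems(1) apply simp
    using Suc.prems(2) apply simp
    using mono Suc.prems(2)[of "n - 1"] by simp
  moreover have "(\<Sum>j<Suc n. b j) * v n \<le> 0"
    using Suc.prems(1)[of "Suc n"] Suc.prems(3) by (simp add: mult_nonpos_nonneg)
  ultimately show ?case using eq by simp
qed

lemma cheb:
  fixes f :: "nat \<Rightarrow> real"
  assumes "\<And>i j. i \<le> j \<Longrightarrow> f i \<le> f j" and "t \<le> l"
  shows "real l * (\<Sum>j<t. f j) \<le> real t * (\<Sum>j<l. f j)"
proof -
  have S1: "(\<Sum>j<t. f j) \<le> real t * f t"
    using sum_bounded_above[of "{..<t}" f "f t"] assms(1) by simp
  have S2: "real (l - t) * f t \<le> (\<Sum>j\<in>{t..<l}. f j)"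
    using sum_bounded_below[of "{t..<l}" "f t" f] assms(1) by simp
  have split: "(\<Sum>j<l. f j) = (\<Sum>j<t. f j) + (\<Sum>j\<in>{t..<l}. f j)"
    using sum.atLeastLessThan_concat[of 0 t l f] assms(2) by (simp add: atLeast0LessThan)
  have rl: "real l = real t + real (l - t)" using assms(2) by simp
  have "real (l - t) * (\<Sum>j<t. f j) \<le> real (l - t) * (real t * f t)"
    using S1 by (intro mult_left_mono) auto
  also have "\<dots> = real t * (real (l - t) * f t)" by simp
  also have "\<dots> \<le> real t * (\<Sum>j\<in>{t..<l}. f j)"
    using S2 by (intro mult_left_mono) auto
  finally have "real (l - t) * (\<Sum>j<t. f j) \<le> real t * (\<Sum>j\<in>{t..<l}. f j)" .
  then show ?thesis unfolding split rl by (simp add: algebra_simps)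
qed

lemma sum_int_reindex:
  fixes f :: "int \<Rightarrow> real"
  shows "(\<Sum>i\<in>{I - int m + 1..I}. f i) = (\<Sum>j<m. f (I - int j))"
proof (induction m)
  case 0 then show ?case by simp
next
  case (Suc m)
  have "{I - int (Suc m) + 1..I} = insert (I - int m) {I - int m + 1..I}" by auto
  then show ?case using Suc by simp
qed

lemma sum_split_if:
  fixes f g :: "nat \<Rightarrow> real"
  assumes "l \<le> n"
  shows "(\<Sum>j<n. if j < l then f j else g j) = (\<Sum>j<l. f j) + (\<Sum>j\<in>{l..<n}. g j)"
proof -
  have "(\<Sum>j<n. if j < l then f j else g j) = (\<Sum>j<l. if j < l then f j else g j) + (\<Sum>j\<in>{l..<n}. if j < l then f j else g j)"
    using sum.atLeastLessThan_concat[of 0 l n "\<lambda>j. if j < l then f j else g j"] assms by (simp add: atLeast0LessThan)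
  then show ?thesis by simp
qed

lemma sum_shift:
  fixes g :: "nat \<Rightarrow> real"
  assumes "l \<le> n"
  shows "(\<Sum>j\<in>{l..<n}. g j) = (\<Sum>k<n - l. g (l + k))"
proof -
  have "(\<Sum>j\<in>{l..<n}. g j) = (\<Sum>j\<in>{0 + l..<(n - l) + l}. g j)" using assms by simp
  also have "\<dots> = (\<Sum>k\<in>{0..<n-l}. g (k + l))" by (rule sum.shift_bounds_nat_ivl)
  finally show ?thesis by (simp add: atLeast0LessThan add.commute)
qed



definition ps :: "real \<Rightarrow> nat \<Rightarrow> nat \<Rightarrow> nat \<Rightarrow> real" where
  "ps q n l j = 1 + (real n - real l) * ((q - 1) / (q^n - 1)) * q^j"
definition ph :: "real \<Rightarrow> real \<Rightarrow> nat \<Rightarrow> nat \<Rightarrow> nat \<Rightarrow> real" where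
  "ph q \<beta> n l j = (real n - real l) * ((q - 1) / (q^n - 1)) * q^j
     + (1 / \<beta>) * ((q^n - q^(j - l)) / (q^n - 1))"
definition om :: "real \<Rightarrow> real \<Rightarrow> nat \<Rightarrow> nat \<Rightarrow> real" where
  "om q \<beta> n l = (1 / \<beta>) * (1 / (q^n - 1)) * (real l * q^n - (q^n - q^(n - l)) / (q - 1))"
definition tau' :: "real \<Rightarrow> real \<Rightarrow> nat \<Rightarrow> real" where
  "tau' q \<beta> n = 1 + (1 / (q^n - 1)) * (1 / \<beta>) * (q^n - (q^n - 1) / (real n * (q - 1)))"
definition co :: "real \<Rightarrow> real \<Rightarrow> nat \<Rightarrow> nat \<Rightarrow> nat \<Rightarrow> real" where
  "co q \<beta> n l j = (if j < l then ps q n l j else ph q \<beta> n l j) + (if j = n - 1 then om q \<beta> n l else 0)"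

lemma aux1: "(D::real) \<noteq> 0 \<Longrightarrow> (\<beta>::real) \<noteq> 0 \<Longrightarrow> a*((q-1)/D)*(Y*X) + (1/\<beta>)*((P - X)/D) = (X*(a*(q-1)*Y - 1/\<beta>) + P/\<beta>)/D"
  by (simp add: field_simps)
lemma aux2: "(D::real) \<noteq> 0 \<Longrightarrow> (r::real) \<noteq> 0 \<Longrightarrow> a*(r/D)*(D/r) = a"
  by (simp add: field_simps)
lemma aux3: "(r::real) \<noteq> 0 \<Longrightarrow> (\<beta>::real) \<noteq> 0 \<Longrightarrow> D \<noteq> 0 \<Longrightarrow> 
  l + (n - l) + (1/\<beta>)*(1/D)*((n-l)*P - (Q-1)/r + l*P - (P - Q)/r) = n + (1/\<beta>)*(1/D)*(n*P - (P-1)/r)"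
  by (simp add: field_simps)
lemma aux4: "(r::real) \<noteq> 0 \<Longrightarrow> (\<beta>::real) \<noteq> 0 \<Longrightarrow> D \<noteq> 0 \<Longrightarrow> (n::real) \<noteq> 0 \<Longrightarrow>
   n + (1/\<beta>)*(1/D)*(n*P - (P-1)/r) = n * (1 + (1/D)*(1/\<beta>)*(P - (P-1)/(n*r)))"
  by (simp add: field_simps)

lemma aux5:
  fixes D \<beta> m sg P :: real
  assumes "D > 0" "\<beta> \<ge> 1" "m \<ge> 1" "sg < 0"
  shows "(sg + P/\<beta>)/D \<le> 1 + (1/D)*(1/\<beta>)*(P - D/m)"
proof -
  have bm: "\<beta> * m \<ge> 1" using assms by (metis mult_mono' mult_1 zero_le_one order_trans)
  then have "1/(\<beta>*m) \<le> 1" by simp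
  moreover have "sg/D < 0" using assms by (simp add: divide_neg_pos)
  moreover have "1 + (1/D)*(1/\<beta>)*(P - D/m) = 1 - 1/(\<beta>*m) + (1/D)*(1/\<beta>)*P"
    using assms by (simp add: field_simps)
  moreover have "(sg + P/\<beta>)/D = sg/D + (1/D)*(1/\<beta>)*P"
    using assms by (simp add: field_simps)
  ultimately show ?thesis by linarith
qed

locale setting =
  fixes q \<beta> :: real and n l :: nat
  assumes n1: "1 \<le> n" and ln: "l \<le> n" and q1: "1 + 1 / real n \<le> q" and b1: "1 \<le> \<beta>"
begin

lemma qgt1: "q > 1"
proof -
  have "0 < 1 / real n" using n1 by simp
  then show ?thesis using q1 by linarith
qed
lemma Pgt1: "q^n > 1" using qgt1 n1 by (simp add: one_less_power)
lemma nq1: "real n * (q - 1) \<ge> 1"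
proof -
  have "real n * (1 / real n) \<le> real n * (q - 1)" using q1 by (intro mult_left_mono) auto
  then show ?thesis using n1 by simp
qed

lemma om_nonneg: "om q \<beta> n l \<ge> 0"
proof -
  have geo: "(\<Sum>k<l. q^k) = (q^l - 1) / (q - 1)" using qgt1 by (simp add: geometric_sum)
  have "(\<Sum>k<l. q^k) \<le> real l * q^l"
    using sum_bounded_above[of "{..<l}" "\<lambda>k. q^k" "q^l"] qgt1
    by (simp add: power_increasing)
  then have "(q^l - 1) / (q - 1) \<le> real l * q^l" using geo by simp
  then have a: "q^(n-l) * ((q^l - 1) / (q - 1)) \<le> q^(n-l) * (real l * q^l)"
    using qgt1 by (intro mult_left_mono) auto
  have "q^(n-l) * q^l = q^n" using ln by (simp add: power_add[symmetric])
  then have "(q^n - q^(n - l)) / (q - 1) \<le> real l * q^n"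
    using a by (simp add: algebra_simps diff_divide_distrib)
  then show ?thesis unfolding om_def using Pgt1 b1 by simp
qed

definition "sg = (real n - real l) * (q - 1) * q^l - 1 / \<beta>"

lemma ph_form: "l \<le> j \<Longrightarrow> ph q \<beta> n l j = (q^(j-l) * sg + q^n / \<beta>) / (q^n - 1)"
proof -
  assume "l \<le> j"
  then have qj: "q^j = q^l * q^(j-l)" by (simp add: power_add[symmetric])
  have d: "q^n - 1 \<noteq> 0" using Pgt1 by simp
  have b: "\<beta> \<noteq> 0" using b1 by simp
  show ?thesis unfolding ph_def sg_def qj using aux1[OF d b] by simp
qed

lemma ps_mono: "i \<le> j \<Longrightarrow> ps q n l i \<le> ps q n l j"
proof -
  assume "i \<le> j"
  then have "q^i \<le> q^j" using qgt1 by (simp add: power_increasing)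
  moreover have "(real n - real l) * ((q - 1) / (q^n - 1)) \<ge> 0" using ln qgt1 Pgt1 by simp
  ultimately show ?thesis unfolding ps_def by (intro add_left_mono mult_left_mono) auto
qed

lemma total: "(\<Sum>j<n. co q \<beta> n l j) = real n * tau' q \<beta> n"
proof -
  have n1': "n - 1 < n" using n1 by simp
  have "(\<Sum>j<n. co q \<beta> n l j) = (\<Sum>j<n. if j < l then ps q n l j else ph q \<beta> n l j) + om q \<beta> n l"
    unfolding co_def using n1' by (simp add: sum.distrib)
  also have "\<dots> = (\<Sum>j<l. ps q n l j) + (\<Sum>j\<in>{l..<n}. ph q \<beta> n l j) + om q \<beta> n l"
    using sum_split_if[OF ln] by simp
  finally have A: "(\<Sum>j<n. co q \<beta> n l j) = (\<Sum>j<l. ps q n l j) + (\<Sum>j\<in>{l..<n}. ph q \<beta> n l j) + om q \<beta> n l" .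
  define K where "K = (real n - real l) * ((q - 1) / (q^n - 1))"
  define G where "G = (\<Sum>j<l. q^j)"
  define H where "H = (\<Sum>j\<in>{l..<n}. q^j)"
  have GH: "G + H = (q^n - 1) / (q - 1)"
    unfolding G_def H_def using sum.atLeastLessThan_concat[of 0 l n "\<lambda>j. q^j"] ln qgt1
    by (simp add: atLeast0LessThan geometric_sum)
  have s1: "(\<Sum>j<l. ps q n l j) = real l + K * G"
    unfolding ps_def K_def G_def by (simp add: sum.distrib sum_distrib_left)
  have sh: "(\<Sum>j\<in>{l..<n}. q^(j - l)) = (q^(n-l) - 1) / (q - 1)"
    using sum_shift[OF ln, of "\<lambda>j. q^(j-l)"] qgt1 by (simp add: geometric_sum)
  have s2: "(\<Sum>j\<in>{l..<n}. ph q \<beta> n l j) = K * H + (1/\<beta>) * (1 / (q^n - 1)) * (real (n - l) * q^n - (q^(n-l) - 1) / (q - 1))"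
  proof -
    have "(\<Sum>j\<in>{l..<n}. ph q \<beta> n l j) = K * H + (1/\<beta>) * (1 / (q^n - 1)) * (\<Sum>j\<in>{l..<n}. (q^n - q^(j - l)))"
      unfolding ph_def K_def H_def by (simp add: sum.distrib sum_distrib_left sum_divide_distrib)
    also have "(\<Sum>j\<in>{l..<n}. (q^n - q^(j - l))) = real (n - l) * q^n - (q^(n-l) - 1) / (q - 1)"
      using sh by (simp add: sum_subtractf)
    finally show ?thesis .
  qed
  have d: "q^n - 1 \<noteq> 0" using Pgt1 by simp
  have r: "q - 1 \<noteq> 0" using qgt1 by simp
  have b: "\<beta> \<noteq> 0" using b1 by simp
  have KGH: "K * (G + H) = real n - real l" unfolding K_def GH by (rule aux2[OF d r])
  have rnl: "real (n - l) = real n - real l" using ln by simp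
  have "(\<Sum>j<n. co q \<beta> n l j) = real l + K * (G + H) + (1/\<beta>) * (1 / (q^n - 1)) *
          ((real n - real l) * q^n - (q^(n-l) - 1) / (q - 1) + real l * q^n - (q^n - q^(n - l)) / (q - 1))"
    unfolding A s1 s2 om_def rnl by (simp add: algebra_simps)
  also have "\<dots> = real n + (1/\<beta>) * (1 / (q^n - 1)) * (real n * q^n - (q^n - 1) / (q - 1))"
    unfolding KGH by (rule aux3[OF r b d])
  also have "\<dots> = real n * tau' q \<beta> n"
    unfolding tau'_def by (rule aux4[OF r b d]) (use n1 in simp)
  finally show ?thesis .
qed

lemma ph_mono: "sg \<ge> 0 \<Longrightarrow> l \<le> j \<Longrightarrow> j \<le> k \<Longrightarrow> ph q \<beta> n l j \<le> ph q \<beta> n l k"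
proof -
  assume a: "sg \<ge> 0" "l \<le> j" "j \<le> k"
  have "q^(j-l) \<le> q^(k-l)" using qgt1 a by (simp add: power_increasing)
  then have "q^(j-l) * sg \<le> q^(k-l) * sg" using a by (simp add: mult_right_mono)
  then have "(q^(j-l) * sg + q^n / \<beta>) / (q^n - 1) \<le> (q^(k-l) * sg + q^n / \<beta>) / (q^n - 1)"
    using Pgt1 by (intro divide_right_mono) auto
  then show ?thesis using ph_form a by simp
qed

lemma ph_le_l: "sg < 0 \<Longrightarrow> l \<le> j \<Longrightarrow> ph q \<beta> n l j \<le> ph q \<beta> n l l"
proof -
  assume a: "sg < 0" "l \<le> j"
  have "1 \<le> q^(j-l)" using qgt1 by simp
  then have "q^(j-l) * sg \<le> 1 * sg" using a by (intro mult_right_mono_neg) auto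
  then have "(q^(j-l) * sg + q^n / \<beta>) / (q^n - 1) \<le> (1 * sg + q^n / \<beta>) / (q^n - 1)"
    using Pgt1 by (intro divide_right_mono) auto
  then show ?thesis using ph_form a by simp
qed

lemma ph_l_tau: "sg < 0 \<Longrightarrow> ph q \<beta> n l l \<le> tau' q \<beta> n"
proof -
  assume a: "sg < 0"
  have "(sg + q^n/\<beta>)/(q^n - 1) \<le> 1 + (1/(q^n - 1))*(1/\<beta>)*(q^n - (q^n - 1)/(real n * (q - 1)))"
    using aux5[of "q^n - 1" \<beta> "real n * (q - 1)" sg "q^n"] Pgt1 b1 nq1 a by simp
  then show ?thesis using ph_form[of l] unfolding tau'_def by simp
qed

lemma co_mono: "sg \<ge> 0 \<Longrightarrow> l \<le> j \<Longrightarrow> j \<le> k \<Longrightarrow> k < n \<Longrightarrow> co q \<beta> n l j \<le> co q \<beta> n l k"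
  unfolding co_def using ph_mono[of j k] om_nonneg by auto

lemma prefix:
  assumes M1: "tau' q \<beta> n \<le> M" and M2: "1 \<le> l \<Longrightarrow> (\<Sum>j<l. ps q n l j) \<le> M * real l"
    and tn: "t \<le> n"
  shows "(\<Sum>j<t. co q \<beta> n l j) \<le> M * real t"
proof -
  have full: "(\<Sum>j<n. co q \<beta> n l j) \<le> M * real n"
  proof -
    have "real n * tau' q \<beta> n \<le> real n * M" using M1 by (intro mult_left_mono) auto
    then show ?thesis using total by (simp add: mult.commute)
  qed
  have small: "(\<Sum>j<t. co q \<beta> n l j) \<le> M * real t" if "t < n" "t \<le> l" for t
  proof (cases "l = 0")
    case True then show ?thesis using that by simp
  next
    case False
    have eq: "(\<Sum>j<t. co q \<beta> n l j) = (\<Sum>j<t. ps q n l j)"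
      using that by (intro sum.cong) (auto simp: co_def)
    have "real l * (\<Sum>j<t. ps q n l j) \<le> real t * (\<Sum>j<l. ps q n l j)"
      using cheb[of "ps q n l" t l] ps_mono that by blast
    also have "\<dots> \<le> real t * (M * real l)" using M2 False by (intro mult_left_mono) auto
    finally have "real l * (\<Sum>j<t. ps q n l j) \<le> real l * (M * real t)" by (simp add: algebra_simps)
    then show ?thesis using eq False by simp
  qed
  show ?thesis
  proof (cases "t = n")
    case True then show ?thesis using full by simp
  next
    case False
    then have tn': "t < n" using tn by simp
    show ?thesis
    proof (cases "t \<le> l")
      case True then show ?thesis using small tn' by simp
    next
      case False
      then have lt: "l \<le> t" by simp
      have DL: "(\<Sum>j<l. co q \<beta> n l j) \<le> M * real l" using small[of l] lt tn' by simp
      have st: "(\<Sum>j<t. co q \<beta> n l j) = (\<Sum>j<l. co q \<beta> n l j) + (\<Sum>j\<in>{l..<t}. co q \<beta> n l j)"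
        using sum.atLeastLessThan_concat[of 0 l t "co q \<beta> n l"] lt by (simp add: atLeast0LessThan)
      have sn: "(\<Sum>j<n. co q \<beta> n l j) = (\<Sum>j<t. co q \<beta> n l j) + (\<Sum>j\<in>{t..<n}. co q \<beta> n l j)"
        using sum.atLeastLessThan_concat[of 0 t n "co q \<beta> n l"] tn by (simp add: atLeast0LessThan)
      have alt1: "(\<Sum>j<t. co q \<beta> n l j) \<le> M * real t" if h: "\<forall>j\<in>{l..<t}. co q \<beta> n l j \<le> M"
      proof -
        have "(\<Sum>j\<in>{l..<t}. co q \<beta> n l j) \<le> real (t - l) * M"
          using sum_bounded_above[of "{l..<t}" "co q \<beta> n l" M] h by simp
        then show ?thesis using st DL lt by (simp add: algebra_simps of_nat_diff)
      qed
      have alt2: "(\<Sum>j<t. co q \<beta> n l j) \<le> M * real t" if h: "\<forall>j\<in>{t..<n}. M \<le> co q \<beta> n l j"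
      proof -
        have "real (n - t) * M \<le> (\<Sum>j\<in>{t..<n}. co q \<beta> n l j)"
          using sum_bounded_below[of "{t..<n}" M "co q \<beta> n l"] h by simp
        then show ?thesis using sn full tn by (simp add: algebra_simps of_nat_diff)
      qed
      show ?thesis
      proof (cases "sg \<ge> 0")
        case True
        show ?thesis
        proof (cases "\<forall>j\<in>{l..<t}. co q \<beta> n l j \<le> M")
          case True then show ?thesis using alt1 by blast
        next
          case False
          then obtain j0 where j0: "j0 \<in> {l..<t}" "co q \<beta> n l j0 > M" by force
          have "\<forall>j\<in>{t..<n}. M \<le> co q \<beta> n l j"
          proof
            fix j assume "j \<in> {t..<n}"
            then have "co q \<beta> n l j0 \<le> co q \<beta> n l j" using co_mono[of j0 j] True j0 by auto
            then show "M \<le> co q \<beta> n l j" using j0 by simp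
          qed
          then show ?thesis using alt2 by blast
        qed
      next
        case False
        have "\<forall>j\<in>{l..<t}. co q \<beta> n l j \<le> M"
        proof
          fix j assume j: "j \<in> {l..<t}"
          then have "co q \<beta> n l j = ph q \<beta> n l j" using tn' by (auto simp: co_def)
          also have "\<dots> \<le> ph q \<beta> n l l" using ph_le_l False j by auto
          also have "\<dots> \<le> tau' q \<beta> n" using ph_l_tau False by auto
          finally show "co q \<beta> n l j \<le> M" using M1 by simp
        qed
        then show ?thesis using alt1 by blast
      qed
    qed
  qed
qed

end


lemma base_facts:
  fixes m :: nat and a :: real
  assumes "1 \<le> m" "1 \<le> a"
  shows "(1 + 1 / real m) ^ m \<ge> 1" "(1 + 1 / real m) ^ m > 0"
    "((1 + 1 / real m) ^ m) powr (a / real m) \<ge> 1 + 1 / real m"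
proof -
  have p: "1 + 1 / real m > 0" by (simp add: add_pos_nonneg)
  have g1: "1 + 1 / real m \<ge> 1" by simp
  show ge: "(1 + 1 / real m) ^ m \<ge> 1" using g1 by (simp add: one_le_power)
  show "(1 + 1 / real m) ^ m > 0" using p by simp
  have "((1 + 1 / real m) ^ m) powr (1 / real m) = ((1 + 1 / real m) powr real m) powr (1 / real m)"
    using powr_realpow[OF p] by simp
  also have "\<dots> = 1 + 1 / real m" using assms(1) p by (simp add: powr_powr)
  finally have e: "((1 + 1 / real m) ^ m) powr (1 / real m) = 1 + 1 / real m" .
  have "((1 + 1 / real m) ^ m) powr (1 / real m) \<le> ((1 + 1 / real m) ^ m) powr (a / real m)"
    using ge assms by (intro powr_mono) (auto simp: divide_right_mono)
  then show "((1 + 1 / real m) ^ m) powr (a / real m) \<ge> 1 + 1 / real m" using e by simp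
qed

lemma pow_conv:
  fixes x a :: real and m j :: nat
  assumes "x > 0"
  shows "x powr (a * real j / real m) = (x powr (a / real m)) ^ j"
proof -
  have "x powr (a * real j / real m) = x powr ((a / real m) * real j)" by simp
  also have "\<dots> = (x powr (a / real m)) powr real j" by (simp add: powr_powr)
  also have "\<dots> = (x powr (a / real m)) ^ j" using assms by (simp add: powr_realpow)
  finally show ?thesis .
qed

theorem lemmaA8:
  fixes \<alpha> :: real and B Ba l :: nat and I :: int and w :: "int \<Rightarrow> real"
  assumes "\<alpha> \<ge> 1"
    and "0 < B" and "B \<le> Ba"
    and "l \<le> Ba" and "I \<ge> int l"
    and "\<And>k. k \<le> 0 \<Longrightarrow> w k = 0"
    and "I \<ge> 1 \<Longrightarrow> 0 \<le> w 1"
    and "\<And>j k. 1 \<le> j \<Longrightarrow> j \<le> k \<Longrightarrow> k \<le> I \<Longrightarrow> w j \<le> w k"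
  shows "(\<Sum>i\<in>{I - int Ba + 1..I - int l}. phi \<alpha> B Ba l I i * w i)
         + (\<Sum>i\<in>{I - int l + 1..I}. psi \<alpha> Ba l I i * w i)
         + w (I - int Ba) * Omega \<alpha> B Ba l
         \<le> MM \<alpha> B Ba l I * (\<Sum>i\<in>{I - int Ba + 1..I}. w i)"
proof -
  note a1 = assms(1) and B0 = assms(2) and BBa = assms(3) and lBa = assms(4)
  define n where "n = Ba"
  define E where "E = EE Ba"
  define q where "q = E powr (\<alpha> / real Ba)"
  define \<beta> where "\<beta> = alphaB \<alpha> B"
  have n1: "1 \<le> Ba" using B0 BBa by simp
  have E_def': "E = (1 + 1 / real Ba) ^ Ba" unfolding E_def EE_def by simp
  have Epos: "E > 0" and E1: "E \<ge> 1" and q1: "q \<ge> 1 + 1 / real Ba"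
    using base_facts[OF n1 a1] unfolding E_def' q_def by auto
  have b1: "\<beta> \<ge> 1"
  proof -
    have "eB B powr (\<alpha> / real B) \<ge> 1 + 1 / real B"
      using base_facts(3)[of B \<alpha>] B0 a1 unfolding eB_def by simp
    then have "real B * (1 / real B) \<le> real B * (eB B powr (\<alpha> / real B) - 1)"
      by (intro mult_left_mono) auto
    then show ?thesis unfolding \<beta>_def alphaB_def using B0 by simp
  qed
  interpret S: setting q \<beta> Ba l
    by unfold_locales (use n1 lBa q1 b1 in auto)
  have qpow: "E powr (\<alpha> * real j / real Ba) = q ^ j" for j
    unfolding q_def using pow_conv[OF Epos] by simp
  have EP: "E powr \<alpha> = q ^ Ba" using qpow[of Ba] n1 by simp
  have Eq: "E powr (\<alpha> / real Ba) = q" unfolding q_def ..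
  have EnL: "E powr (\<alpha> * (real Ba - real l) / real Ba) = q ^ (Ba - l)"
    using qpow[of "Ba - l"] lBa by (simp add: of_nat_diff)
  have psi_eq: "psi \<alpha> Ba l I (I - int j) = ps q Ba l j" for j
    unfolding psi_def ps_def cc_def E_def[symmetric] EP Eq
    using qpow[of j] by simp
  have phi_eq: "phi \<alpha> B Ba l I (I - int j) = ph q \<beta> Ba l j" if "l \<le> j" for j
  proof -
    have e: "real_of_int (I - int l - (I - int j)) = real (j - l)" using that by simp
    have "E powr (\<alpha> * real_of_int (I - int l - (I - int j)) / real Ba) = q ^ (j - l)"
      unfolding e by (rule qpow)
    then show ?thesis
      unfolding phi_def ph_def cc_def E_def[symmetric] EP Eq \<beta>_def[symmetric]
      using qpow[of j] by simp
  qed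
  have om_eq: "Omega \<alpha> B Ba l = om q \<beta> Ba l"
    unfolding Omega_def om_def E_def[symmetric] EP Eq EnL \<beta>_def[symmetric] ..
  have aBa: "alphaBa \<alpha> Ba = real Ba * (q - 1)"
    unfolding alphaBa_def E_def[symmetric] Eq ..
  have tau_eq: "tau \<alpha> B Ba = tau' q \<beta> Ba"
    unfolding tau_def tau'_def E_def[symmetric] EP aBa \<beta>_def[symmetric] ..
  have Psi_eq: "Psi \<alpha> Ba l I = (\<Sum>j<l. ps q Ba l j)"
    unfolding Psi_def sum_int_reindex psi_eq ..
  define M where "M = MM \<alpha> B Ba l I"
  have M1: "tau' q \<beta> Ba \<le> M" unfolding M_def MM_def tau_eq by auto
  have M2: "(\<Sum>j<l. ps q Ba l j) \<le> M * real l" if "1 \<le> l"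
  proof -
    have "Psi \<alpha> Ba l I / real l \<le> M" unfolding M_def MM_def using that by auto
    then show ?thesis using that Psi_eq by (simp add: divide_le_eq)
  qed
  have wnn: "0 \<le> w k" if "k \<le> I" for k
  proof (cases "k \<le> 0")
    case True then show ?thesis using assms(6) by simp
  next
    case False
    then have "w 1 \<le> w k" using assms(8)[of 1 k] that by simp
    moreover have "0 \<le> w 1" using assms(7) False that by simp
    ultimately show ?thesis by simp
  qed
  have wmono: "w (k - 1) \<le> w k" if "k \<le> I" for k
  proof (cases "k - 1 \<le> 0")
    case True then show ?thesis using assms(6) wnn that by simp
  next
    case False then show ?thesis using assms(8)[of "k - 1" k] that by simp
  qed
  define v where "v j = w (I - int j)" for j
  have vmono: "v (Suc j) \<le> v j" for j
    using wmono[of "I - int j"] unfolding v_def by (simp add: algebra_simps)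
  have vnn: "0 \<le> v j" for j unfolding v_def using wnn by simp
  define a0 where "a0 j = (if j < l then ps q Ba l j else ph q \<beta> Ba l j)" for j
  have fin1: "finite {I - int Ba + 1..I - int l}" and fin2: "finite {I - int l + 1..I}" by auto
  have un: "{I - int Ba + 1..I} = {I - int Ba + 1..I - int l} \<union> {I - int l + 1..I}" using lBa by auto
  define g where "g i = (if i \<le> I - int l then phi \<alpha> B Ba l I i * w i else psi \<alpha> Ba l I i * w i)" for i
  have "(\<Sum>i\<in>{I - int Ba + 1..I}. g i) = (\<Sum>i\<in>{I - int Ba + 1..I - int l}. g i) + (\<Sum>i\<in>{I - int l + 1..I}. g i)"
    unfolding un by (rule sum.union_disjoint) auto
  also have "(\<Sum>i\<in>{I - int Ba + 1..I - int l}. g i) = (\<Sum>i\<in>{I - int Ba + 1..I - int l}. phi \<alpha> B Ba l I i * w i)"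
    unfolding g_def by (intro sum.cong) auto
  also have "(\<Sum>i\<in>{I - int l + 1..I}. g i) = (\<Sum>i\<in>{I - int l + 1..I}. psi \<alpha> Ba l I i * w i)"
    unfolding g_def by (intro sum.cong) auto
  finally have L1: "(\<Sum>i\<in>{I - int Ba + 1..I - int l}. phi \<alpha> B Ba l I i * w i) + (\<Sum>i\<in>{I - int l + 1..I}. psi \<alpha> Ba l I i * w i)
      = (\<Sum>i\<in>{I - int Ba + 1..I}. g i)" by simp
  have L2: "(\<Sum>i\<in>{I - int Ba + 1..I}. g i) = (\<Sum>j<Ba. a0 j * v j)"
    unfolding sum_int_reindex
  proof (intro sum.cong refl)
    fix j assume "j \<in> {..<Ba}"
    show "g (I - int j) = a0 j * v j"
    proof (cases "j < l")
      case True then show ?thesis unfolding g_def a0_def v_def using psi_eq by simp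
    next
      case False then show ?thesis unfolding g_def a0_def v_def using phi_eq[of j] by simp
    qed
  qed
  have R: "(\<Sum>i\<in>{I - int Ba + 1..I}. w i) = (\<Sum>j<Ba. v j)"
    unfolding sum_int_reindex v_def ..
  have wB: "w (I - int Ba) = v Ba" unfolding v_def ..
  have lastin: "Ba - 1 \<in> {..<Ba}" using n1 by simp
  have co_sum: "(\<Sum>j<Ba. co q \<beta> Ba l j * v j) = (\<Sum>j<Ba. a0 j * v j) + v (Ba - 1) * om q \<beta> Ba l"
  proof -
    have "(\<Sum>j<Ba. co q \<beta> Ba l j * v j) = (\<Sum>j<Ba. a0 j * v j) + (\<Sum>j<Ba. if j = Ba - 1 then om q \<beta> Ba l * v j else 0)"
    proof -
      have "\<And>j. co q \<beta> Ba l j * v j = a0 j * v j + (if j = Ba - 1 then om q \<beta> Ba l * v j else 0)"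
        unfolding co_def a0_def by (simp add: distrib_right)
      then show ?thesis by (simp add: sum.distrib)
    qed
    also have "(\<Sum>j<Ba. if j = Ba - 1 then om q \<beta> Ba l * v j else 0) = om q \<beta> Ba l * v (Ba - 1)"
      using lastin by (simp add: sum.delta)
    finally show ?thesis by simp
  qed
  have vlast: "v Ba \<le> v (Ba - 1)" using vmono[of "Ba - 1"] n1 by simp
  have omv: "v Ba * om q \<beta> Ba l \<le> v (Ba - 1) * om q \<beta> Ba l"
    using vlast S.om_nonneg by (intro mult_right_mono) auto
  have abel: "(\<Sum>j<Ba. (co q \<beta> Ba l j - M) * v j) \<le> 0"
  proof (rule abel_nonpos)
    fix t assume "t \<le> Ba"
    then have "(\<Sum>j<t. co q \<beta> Ba l j) \<le> M * real t" using S.prefix[OF M1 M2] by blast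
    then show "(\<Sum>j<t. co q \<beta> Ba l j - M) \<le> 0" by (simp add: sum_subtractf mult.commute)
  next
    fix j show "v (Suc j) \<le> v j" by (rule vmono)
  next
    show "0 \<le> v (Ba - 1)" by (rule vnn)
  qed
  then have "(\<Sum>j<Ba. co q \<beta> Ba l j * v j) \<le> M * (\<Sum>j<Ba. v j)"
    by (simp add: algebra_simps sum_subtractf sum_distrib_left)
  then show ?thesis
    unfolding L1 L2 R wB om_eq M_def[symmetric] using co_sum omv by simp
qed

end
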